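(* Let $G$ be a finitely generated torsion-free nilpotent group of nilpotency class $2$ with an involution $\ast$. Then $G$ contains a $\ast$-invariant Heisenberg subgroup; more precisely, there exist $x,y\in G$ with $[x,y]\ne 1$, $x^\ast\in\{x,x^{-1}\}$ and $y^\ast\in\{y,y^{-1}\}$.
   Context: An involution on a group is an anti-automorphism of order $2$. Commutators are $[x,y]=x^{-1}y^{-1}xy$. In a torsion-free group, two noncommuting elements whose commutator commutes with both generate a Heisenberg group $\langle x,y : [x,[x,y]]=[y,[x,y]]=1\rangle$. *)

theory Defs
  imports "HOL-Algebra.Algebra"
begin

definition commutator :: "('a, 'b) monoid_scheme \<Rightarrow> 'a \<Rightarrow> 'a \<Rightarrow> 'a" where
  "commutator G x y = inv\<^bsub>G\<^esub> x \<otimes>\<^bsub>G\<^esub> inv\<^bsub>G\<^esub> y \<otimes>\<^bsub>G\<^esub> x \<otimes>\<^bsub>G\<^esub> y"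

fun lower_central :: "('a, 'b) monoid_scheme \<Rightarrow> nat \<Rightarrow> 'a set" where
  "lower_central G 0 = carrier G"
| "lower_central G (Suc n) =
     generate G {commutator G x y | x y. x \<in> lower_central G n \<and> y \<in> carrier G}"

(* nilpotent of class exactly 2: gamma_3 = 1, gamma_2 \<noteq> 1 (index shifted by one) *)
definition nilpotent_class2 :: "('a, 'b) monoid_scheme \<Rightarrow> bool" where
  "nilpotent_class2 G \<longleftrightarrow> lower_central G 2 = {\<one>\<^bsub>G\<^esub>} \<and> lower_central G 1 \<noteq> {\<one>\<^bsub>G\<^esub>}"

definition finitely_generated_group :: "('a, 'b) monoid_scheme \<Rightarrow> bool" where
  "finitely_generated_group G \<longleftrightarrow> (\<exists>S. finite S \<and> S \<subseteq> carrier G \<and> generate G S = carrier G)"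

definition torsion_free_group :: "('a, 'b) monoid_scheme \<Rightarrow> bool" where
  "torsion_free_group G \<longleftrightarrow>
     (\<forall>x\<in>carrier G. \<forall>n::nat. n > 0 \<and> x [^]\<^bsub>G\<^esub> n = \<one>\<^bsub>G\<^esub> \<longrightarrow> x = \<one>\<^bsub>G\<^esub>)"

definition group_involution :: "('a, 'b) monoid_scheme \<Rightarrow> ('a \<Rightarrow> 'a) \<Rightarrow> bool" where
  "group_involution G s \<longleftrightarrow>
     bij_betw s (carrier G) (carrier G) \<and>
     (\<forall>x\<in>carrier G. \<forall>y\<in>carrier G. s (x \<otimes>\<^bsub>G\<^esub> y) = s y \<otimes>\<^bsub>G\<^esub> s x) \<and>
     (\<forall>x\<in>carrier G. s (s x) = x) \<and>
     (\<exists>x\<in>carrier G. s x \<noteq> x)"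

end

theory Submission
  imports Defs
begin

lemma (in group) canc1[simp]: "x \<in> carrier G \<Longrightarrow> y \<in> carrier G \<Longrightarrow> x \<otimes> (inv x \<otimes> y) = y"
  by (simp add: m_assoc[symmetric])
lemma (in group) canc2[simp]: "x \<in> carrier G \<Longrightarrow> y \<in> carrier G \<Longrightarrow> inv x \<otimes> (x \<otimes> y) = y"
  by (simp add: m_assoc[symmetric])

lemma (in group) comm_one_commute:
  assumes "c \<in> carrier G" "z \<in> carrier G" "commutator G c z = \<one>"
  shows "c \<otimes> z = z \<otimes> c"
proof -
  have "z \<otimes> c \<otimes> commutator G c z = c \<otimes> z"
    using assms(1,2) by (simp add: commutator_def m_assoc)
  thus ?thesis using assms by simp
qed

locale cc_group = group +
  assumes cc: "\<lbrakk>x \<in> carrier G; y \<in> carrier G; z \<in> carrier G\<rbrakk> \<Longrightarrow>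
     commutator G x y \<otimes> z = z \<otimes> commutator G x y"
begin

lemma comm_closed[simp]: "x \<in> carrier G \<Longrightarrow> y \<in> carrier G \<Longrightarrow> commutator G x y \<in> carrier G"
  by (simp add: commutator_def)

lemma comm_inv_swap: "x \<in> carrier G \<Longrightarrow> y \<in> carrier G \<Longrightarrow> inv commutator G x y = commutator G y x"
  by (simp add: commutator_def inv_mult_group m_assoc)

lemma bilin1:
  assumes "x \<in> carrier G" "y \<in> carrier G" "z \<in> carrier G"
  shows "commutator G (x \<otimes> y) z = commutator G x z \<otimes> commutator G y z"
proof -
  have e: "inv x \<otimes> inv z \<otimes> x = commutator G x z \<otimes> inv z"
    using assms by (simp add: commutator_def m_assoc)
  have "commutator G (x \<otimes> y) z = inv y \<otimes> (inv x \<otimes> inv z \<otimes> x) \<otimes> y \<otimes> z"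
    using assms by (simp add: commutator_def inv_mult_group m_assoc)
  also have "\<dots> = inv y \<otimes> (commutator G x z \<otimes> inv z) \<otimes> y \<otimes> z" using e by simp
  also have "\<dots> = (inv y \<otimes> commutator G x z) \<otimes> (inv z \<otimes> y \<otimes> z)"
    using assms by (simp add: m_assoc)
  also have "\<dots> = (commutator G x z \<otimes> inv y) \<otimes> (inv z \<otimes> y \<otimes> z)"
    using assms cc[of x z "inv y"] by simp
  also have "\<dots> = commutator G x z \<otimes> commutator G y z"
    using assms by (simp add: commutator_def m_assoc)
  finally show ?thesis .
qed

lemma bilin2:
  assumes "x \<in> carrier G" "y \<in> carrier G" "z \<in> carrier G"
  shows "commutator G x (y \<otimes> z) = commutator G x y \<otimes> commutator G x z"
proof -
  have "commutator G x (y \<otimes> z) = inv (commutator G (y \<otimes> z) x)"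
    using assms by (simp add: comm_inv_swap)
  also have "\<dots> = inv (commutator G y x \<otimes> commutator G z x)" using assms by (simp add: bilin1)
  also have "\<dots> = inv (commutator G z x) \<otimes> inv (commutator G y x)"
    using assms by (simp add: inv_mult_group)
  also have "\<dots> = commutator G x z \<otimes> commutator G x y" using assms by (simp add: comm_inv_swap)
  also have "\<dots> = commutator G x y \<otimes> commutator G x z" using assms cc[of x y "commutator G x z"] by simp
  finally show ?thesis .
qed

lemma inv1:
  assumes "x \<in> carrier G" "z \<in> carrier G"
  shows "commutator G (inv x) z = inv (commutator G x z)"
proof -
  have "commutator G x z \<otimes> commutator G (inv x) z = \<one>"
    using assms bilin1[of x "inv x" z] by (simp add: commutator_def m_assoc)
  hence "inv (commutator G (inv x) z) = commutator G x z"
    using assms inv_equality[of "commutator G x z" "commutator G (inv x) z"] by simp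
  hence "inv (inv (commutator G (inv x) z)) = inv (commutator G x z)" by simp
  thus ?thesis using assms by simp
qed

lemma inv2:
  assumes "x \<in> carrier G" "z \<in> carrier G"
  shows "commutator G x (inv z) = inv (commutator G x z)"
proof -
  have "commutator G x (inv z) = inv (commutator G (inv z) x)" using assms by (simp add: comm_inv_swap)
  also have "\<dots> = inv (inv (commutator G z x))" using assms by (simp add: inv1)
  also have "\<dots> = inv (commutator G x z)" using assms by (simp add: comm_inv_swap)
  finally show ?thesis .
qed

lemma swap_comm: "u \<in> carrier G \<Longrightarrow> b \<in> carrier G \<Longrightarrow> u \<otimes> b = b \<otimes> u \<otimes> commutator G u b"
  by (simp add: commutator_def m_assoc)

lemma palin:
  assumes "u \<in> carrier G" "b \<in> carrier G"
  shows "u \<otimes> b \<otimes> b \<otimes> u = b \<otimes> u \<otimes> u \<otimes> b"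
proof -
  define c where "c = commutator G u b"
  have c: "c \<in> carrier G" using assms by (simp add: c_def)
  have p: "u \<otimes> b = b \<otimes> u \<otimes> c" unfolding c_def by (rule swap_comm[OF assms])
  have "u \<otimes> b \<otimes> b \<otimes> u = (u \<otimes> b) \<otimes> (b \<otimes> u)" using assms by (simp add: m_assoc)
  also have "\<dots> = (b \<otimes> u) \<otimes> (c \<otimes> (b \<otimes> u))" using assms c p by (simp add: m_assoc)
  also have "\<dots> = (b \<otimes> u) \<otimes> ((b \<otimes> u) \<otimes> c)" using assms cc[of u b "b \<otimes> u"] by (simp add: c_def)
  also have "\<dots> = (b \<otimes> u) \<otimes> (u \<otimes> b)" using p by simp
  also have "\<dots> = b \<otimes> u \<otimes> u \<otimes> b" using assms by (simp add: m_assoc)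
  finally show ?thesis .
qed

lemma four:
  assumes "c \<in> carrier G" "d \<in> carrier G" "c \<otimes> d = \<one>" "c \<otimes> inv d \<otimes> inv d \<otimes> c = \<one>"
    "torsion_free_group G"
  shows "c = \<one>"
proof -
  have "inv d = c" using assms inv_equality[of c d] by simp
  hence "c [^] (4::nat) = \<one>" using assms by (simp add: eval_nat_numeral m_assoc)
  thus ?thesis using assms(1,5) unfolding torsion_free_group_def by (metis zero_less_numeral)
qed

lemma main:
  assumes inv: "group_involution G s" and tf: "torsion_free_group G"
    and H: "\<And>x y. x \<in> carrier G \<Longrightarrow> y \<in> carrier G \<Longrightarrow> s x \<in> {x, inv x} \<Longrightarrow> s y \<in> {y, inv y}
              \<Longrightarrow> commutator G x y = \<one>"
    and g: "g \<in> carrier G" and h: "h \<in> carrier G"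
  shows "commutator G g h = \<one>"
proof -
  have sc: "\<And>x. x \<in> carrier G \<Longrightarrow> s x \<in> carrier G"
    using inv unfolding group_involution_def bij_betw_def by auto
  have sm: "\<And>x y. x \<in> carrier G \<Longrightarrow> y \<in> carrier G \<Longrightarrow> s (x \<otimes> y) = s y \<otimes> s x"
    using inv unfolding group_involution_def by auto
  have ss: "\<And>x. x \<in> carrier G \<Longrightarrow> s (s x) = x"
    using inv unfolding group_involution_def by auto
  have s1: "s \<one> = \<one>"
  proof -
    have "s \<one> \<otimes> s \<one> = s \<one> \<otimes> \<one>" using sm[of \<one> \<one>] sc[of \<one>] by simp
    thus ?thesis using sc[of \<one>] by (simp add: l_cancel_one')
  qed
  have si: "\<And>x. x \<in> carrier G \<Longrightarrow> s (inv x) = inv (s x)"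
  proof -
    fix x assume x: "x \<in> carrier G"
    have "s (inv x) \<otimes> s x = \<one>" using sm[of x "inv x"] x s1 by simp
    thus "s (inv x) = inv (s x)" using x sc inv_equality[of "s (inv x)" "s x"] by simp
  qed
  have A: "s (k \<otimes> s k) \<in> {k \<otimes> s k, inv (k \<otimes> s k)}" if "k \<in> carrier G" for k
    using that sm sc ss by simp
  have X: "s (k \<otimes> inv (s k) \<otimes> inv (s k) \<otimes> k) \<in>
       {k \<otimes> inv (s k) \<otimes> inv (s k) \<otimes> k, inv (k \<otimes> inv (s k) \<otimes> inv (s k) \<otimes> k)}" if k: "k \<in> carrier G" for k
  proof -
    have "s (k \<otimes> inv (s k) \<otimes> inv (s k) \<otimes> k) = s k \<otimes> inv k \<otimes> inv k \<otimes> s k"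
      using k sm sc ss si by (simp add: m_assoc)
    also have "\<dots> = inv k \<otimes> s k \<otimes> s k \<otimes> inv k" by (rule palin) (use k sc in auto)
    also have "\<dots> = inv (k \<otimes> inv (s k) \<otimes> inv (s k) \<otimes> k)"
      using k sc by (simp add: inv_mult_group m_assoc)
    finally show ?thesis by simp
  qed
  have step1: "commutator G k q = \<one>" if k: "k \<in> carrier G" and q: "q \<in> carrier G"
    and Pq: "s q \<in> {q, inv q}" for k q
  proof -
    have e1: "commutator G (k \<otimes> s k) q = \<one>" using H[OF _ q A[OF k] Pq] k sc by simp
    have e2: "commutator G (k \<otimes> inv (s k) \<otimes> inv (s k) \<otimes> k) q = \<one>"
      using H[OF _ q X[OF k] Pq] k sc by simp
    show ?thesis
    proof (rule four[OF _ _ _ _ tf])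
      show "commutator G k q \<otimes> commutator G (s k) q = \<one>" using e1 k q sc by (simp add: bilin1)
      show "commutator G k q \<otimes> inv (commutator G (s k) q) \<otimes> inv (commutator G (s k) q) \<otimes>
            commutator G k q = \<one>" using e2 k q sc by (simp add: bilin1 inv1)
    qed (use k q sc in auto)
  qed
  have e1: "commutator G g (h \<otimes> s h) = \<one>"
    using step1[OF g _ A[OF h]] h sc by simp
  have e2: "commutator G g (h \<otimes> inv (s h) \<otimes> inv (s h) \<otimes> h) = \<one>"
    using step1[OF g _ X[OF h]] h sc by simp
  show ?thesis
  proof (rule four[OF _ _ _ _ tf])
    show "commutator G g h \<otimes> commutator G g (s h) = \<one>" using e1 g h sc by (simp add: bilin2)
    show "commutator G g h \<otimes> inv (commutator G g (s h)) \<otimes> inv (commutator G g (s h)) \<otimes>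
          commutator G g h = \<one>" using e2 g h sc by (simp add: bilin2 inv2)
  qed (use g h sc in auto)
qed

end


theorem lemma2p3:
  fixes G :: "('a, 'b) monoid_scheme" and s :: "'a \<Rightarrow> 'a"
  assumes "group G"
    and "finitely_generated_group G"
    and "torsion_free_group G"
    and "nilpotent_class2 G"
    and "group_involution G s"
  shows "\<exists>x\<in>carrier G. \<exists>y\<in>carrier G. commutator G x y \<noteq> \<one>\<^bsub>G\<^esub> \<and>
           s x \<in> {x, inv\<^bsub>G\<^esub> x} \<and> s y \<in> {y, inv\<^bsub>G\<^esub> y}"
proof (rule ccontr)
  assume nc: "\<not> ?thesis"
  interpret group G by fact
  have L2: "lower_central G (Suc (Suc 0)) = {\<one>\<^bsub>G\<^esub>}" and L1: "lower_central G (Suc 0) \<noteq> {\<one>\<^bsub>G\<^esub>}"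
    using assms(4) unfolding nilpotent_class2_def numeral_2_eq_2 One_nat_def by auto
  have "cc_group G"
  proof (unfold_locales)
    fix x y z assume xyz: "x \<in> carrier G" "y \<in> carrier G" "z \<in> carrier G"
    have "commutator G x y \<in> lower_central G (Suc 0)"
      using xyz by (auto intro: generate.incl)
    hence "commutator G (commutator G x y) z \<in> lower_central G (Suc (Suc 0))"
      using xyz by (simp only: lower_central.simps) (blast intro: generate.incl)
    hence "commutator G (commutator G x y) z = \<one>\<^bsub>G\<^esub>" using L2 by simp
    thus "commutator G x y \<otimes>\<^bsub>G\<^esub> z = z \<otimes>\<^bsub>G\<^esub> commutator G x y"
      using comm_one_commute[of "commutator G x y" z] xyz
      by (simp add: commutator_def)
  qed
  then interpret cc: cc_group G .
  have all: "commutator G g h = \<one>\<^bsub>G\<^esub>" if "g \<in> carrier G" "h \<in> carrier G" for g h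
    by (rule cc.main[OF assms(5) assms(3) _ that]) (use nc in blast)
  have "lower_central G (Suc 0) \<subseteq> {\<one>\<^bsub>G\<^esub>}"
  proof
    fix w assume "w \<in> lower_central G (Suc 0)"
    hence "w \<in> generate G {commutator G x y | x y. x \<in> carrier G \<and> y \<in> carrier G}" by simp
    thus "w \<in> {\<one>\<^bsub>G\<^esub>}"
    proof (induction rule: generate.induct)
      case (eng h1 h2) thus ?case by simp
    qed (auto simp: all)
  qed
  moreover have "\<one>\<^bsub>G\<^esub> \<in> lower_central G (Suc 0)" by (simp add: generate.one)
  ultimately show False using L1 by blast
qed

end
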